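(* Let $d, N, M \ge 1$ be integers, $r \in \{0,1,\dots,d\}$, $\sigma \ge 0$, and let $\Lambda \in \mathbb{R}^{d\times d}$ be symmetric positive semidefinite with eigendecomposition $\Lambda = QDQ^\top$, $Q$ orthonormal, $D = \mathrm{diag}([\lambda_1,\dots,\lambda_d])$, $\lambda_1\ge\dots\ge\lambda_d\ge 0$. Let $V^* = \mathrm{diag}([v_1^*,\dots,v_d^*])$ with $v_i^* = \frac{N}{(N+1)\lambda_i + \mathrm{tr}(D)}$ for $i \le r$ and $v_i^* = 0$ for $i>r$, let $c \neq 0$, $U^* = cQV^*Q^\top$, $u = 1/c$, and let $f$ be the linear self-attention model $$f(E) = \left[E + W^{PV} E \cdot \frac{E^\top W^{KQ} E}{M}\right]_{(d+1),(M+1)}, \qquad W^{PV} = \begin{pmatrix} 0_{d\times d} & 0_d \\ 0_d^\top & u\end{pmatrix},\quad W^{KQ} = \begin{pmatrix} U^* & 0_d \\ 0_d^\top & 0\end{pmatrix},$$ applied to an input $E \in \mathbb{R}^{(d+1)\times(M+1)}$ (the output is the bottom-right entry). Fix $w \in \mathbb{R}^d$ and write $w = Q(s+\xi)$ where $s,\xi\in\mathbb{R}^d$ satisfy $s_i = 0$ for all $r < i \le d$ and $\xi_i = 0$ for all $1 \le i \le r$. Let $x_1,\dots,x_M,x_q \overset{\text{i.i.d.}}{\sim}\mathcal{N}(0,\Lambda)$ and independently $\epsilon_1,\dots,\epsilon_M \overset{\text{i.i.d.}}{\sim}\mathcal{N}(0,\sigma^2)$, and let $$\widehat{E} = \begin{pmatrix}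 x_1 & \cdots & x_M & x_q \\ \langle w,x_1\rangle + \epsilon_1 & \cdots & \langle w,x_M\rangle + \epsilon_M & 0\end{pmatrix}.$$ Then $$\mathbb{E}_{x_1,\epsilon_1,\dots,x_M,\epsilon_M,x_q}\left(f(\widehat E) - \langle w, x_q\rangle\right)^2 = \frac1M\|s\|^2_{(V^* )^2D^3} + \frac1M\left(\|s+\xi\|_D^2 + \sigma^2\right)\mathrm{tr}\left((V^* )^2D^2\right) + \|\xi\|_D^2 + \sum_{i\in[r]} s_i^2\lambda_i(\lambda_i v_i^* - 1)^2.$$
   Context: For a positive semidefinite matrix $A$, $\|x\|_A^2 := x^\top A x$. $[r] = \{1,\dots,r\}$. The model $f$ is the optimal rank-$r$ one-layer linear self-attention solution for in-context linear regression with $N$ pretraining examples per prompt; at evaluation the normalization factor equals the number $M$ of in-context examples. *)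

theory Defs
  imports "HOL-Probability.Probability" "Jordan_Normal_Form.Matrix"
begin

definition mat_tr :: "real mat \<Rightarrow> real" where
  "mat_tr A = (\<Sum>i<dim_row A. A $$ (i, i))"

definition qnorm2 :: "real mat \<Rightarrow> real vec \<Rightarrow> real" where
  "qnorm2 A x = scalar_prod x (A *\<^sub>v x)"

definition normal_meas :: "real \<Rightarrow> real measure" where
  "normal_meas v = (if v = 0 then return lborel 0
                    else density lborel (normal_density 0 (sqrt v)))"

text \<open>mu is the law N(0,Lam) of a random vector in R^d (vectors represented as
  functions on {..<d} in the product space), defined by: every linear functional
  <t,x> is distributed as N(0, t^T Lam t).\<close>
definition gaussian_vec :: "nat \<Rightarrow> real mat \<Rightarrow> (nat \<Rightarrow> real) measure \<Rightarrow> bool" where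
  "gaussian_vec d Lam mu \<longleftrightarrow> prob_space mu \<and>
     sets mu = sets (PiM {..<d} (\<lambda>_. lborel)) \<and>
     (\<forall>t::nat \<Rightarrow> real. distr mu lborel (\<lambda>x. \<Sum>i<d. t i * x i)
        = normal_meas (\<Sum>i<d. \<Sum>j<d. t i * Lam $$ (i, j) * t j))"

definition lsa :: "nat \<Rightarrow> nat \<Rightarrow> real mat \<Rightarrow> real mat \<Rightarrow> real mat \<Rightarrow> real" where
  "lsa d M WPV WKQ E =
     (E + (1 / real M) \<cdot>\<^sub>m (WPV * E * (transpose_mat E * WKQ * E))) $$ (d, M)"

definition WPV_mat :: "nat \<Rightarrow> real \<Rightarrow> real mat" where
  "WPV_mat d u = four_block_mat (0\<^sub>m d d) (0\<^sub>m d 1) (0\<^sub>m 1 d) (Matrix.mat 1 1 (\<lambda>_. u))"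

definition WKQ_mat :: "nat \<Rightarrow> real mat \<Rightarrow> real mat" where
  "WKQ_mat d U = four_block_mat U (0\<^sub>m d 1) (0\<^sub>m 1 d) (0\<^sub>m 1 1)"

definition prompt_mat :: "nat \<Rightarrow> nat \<Rightarrow> real vec \<Rightarrow> (nat \<Rightarrow> nat \<Rightarrow> real) \<Rightarrow> (nat \<Rightarrow> real)
     \<Rightarrow> (nat \<Rightarrow> real) \<Rightarrow> real mat" where
  "prompt_mat d M w xs xq es = Matrix.mat (d + 1) (M + 1) (\<lambda>(i, j).
     if i < d then (if j < M then xs j i else xq i)
     else (if j < M then scalar_prod w (vec d (xs j)) + es j else 0))"

text \<open>Optimal diagonal entries v_i^* (0-based index i; paper index i+1).\<close>
definition vstar :: "nat \<Rightarrow> nat \<Rightarrow> nat \<Rightarrow> (nat \<Rightarrow> real) \<Rightarrow> nat \<Rightarrow> real" where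
  "vstar d N r lam i = (if i < r then real N / ((real N + 1) * lam i + (\<Sum>k<d. lam k)) else 0)"

end

theory Submission imports Defs begin

lemma normal_meas_facts:
  fixes v :: real assumes v: "v \<ge> 0"
  shows "prob_space (normal_meas v)"
    and "sets (normal_meas v) = sets lborel"
    and "integrable (normal_meas v) (\<lambda>y. y ^ n)"
    and "integral\<^sup>L (normal_meas v) (\<lambda>y. y) = 0"
    and "integral\<^sup>L (normal_meas v) (\<lambda>y. y ^ 2) = v"
    and "integral\<^sup>L (normal_meas v) (\<lambda>y. y ^ 4) = 3 * v ^ 2"
proof -
  consider "v = 0" | "v > 0" using v by linarith
  then have "prob_space (normal_meas v) \<and> sets (normal_meas v) = sets lborel \<and>
    integrable (normal_meas v) (\<lambda>y. y ^ n) \<and>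
    integral\<^sup>L (normal_meas v) (\<lambda>y. y) = 0 \<and>
    integral\<^sup>L (normal_meas v) (\<lambda>y. y ^ 2) = v \<and>
    integral\<^sup>L (normal_meas v) (\<lambda>y. y ^ 4) = 3 * v ^ 2"
  proof cases
    case 1
    then have eq: "normal_meas v = return lborel 0" by (simp add: normal_meas_def)
    interpret prob_space "return lborel (0::real)" by (rule prob_space_return) simp
    have "integrable (return lborel (0::real)) (\<lambda>y. y ^ n)"
      by (rule integrable_const_bound[where B="1"]) (auto simp: AE_return power_0_left)
    then show ?thesis unfolding eq using 1
      by (simp add: integral_return prob_space_axioms)
  next
    case 2
    let ?s = "sqrt v"
    have s: "?s > 0" using 2 by simp
    have eq: "normal_meas v = density lborel (\<lambda>x. ennreal (normal_density 0 ?s x))"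
      using 2 by (simp add: normal_meas_def)
    have I: "integrable lborel (\<lambda>x. normal_density 0 ?s x * x ^ k)" for k
      using integrable_normal_moment[OF s, of 0 k] by simp
    have "integral\<^sup>L lborel (\<lambda>x. normal_density 0 ?s x * (x - 0) ^ (2 * 1)) = fact (2 * 1) / ((2 / ?s\<^sup>2)^1 * fact 1)"
      by (rule integral_normal_moment_even[OF s])
    then have m2: "integral\<^sup>L lborel (\<lambda>x. normal_density 0 ?s x * x ^ 2) = v"
      using 2 by simp
    have "integral\<^sup>L lborel (\<lambda>x. normal_density 0 ?s x * (x - 0) ^ (2 * 2)) = fact (2 * 2) / ((2 / ?s\<^sup>2)^2 * fact 2)"
      by (rule integral_normal_moment_even[OF s])
    then have m4: "integral\<^sup>L lborel (\<lambda>x. normal_density 0 ?s x * x ^ 4) = 3 * v ^ 2"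
      using 2 by (simp add: fact_numeral power2_eq_square)
    have "integral\<^sup>L lborel (\<lambda>x. normal_density 0 ?s x * (x - 0) ^ (2 * 0 + 1)) = 0"
      by (rule integral_normal_moment_odd[OF s])
    then have m1: "integral\<^sup>L lborel (\<lambda>x. normal_density 0 ?s x * x) = 0" by simp
    show ?thesis
      unfolding eq
      using I[of n] m1 m2 m4 prob_space_normal_density[OF s]
      by (simp add: integrable_density integral_density prob_space_normal_density)
  qed
  then show "prob_space (normal_meas v)"
    and "sets (normal_meas v) = sets lborel"
    and "integrable (normal_meas v) (\<lambda>y. y ^ n)"
    and "integral\<^sup>L (normal_meas v) (\<lambda>y. y) = 0"
    and "integral\<^sup>L (normal_meas v) (\<lambda>y. y ^ 2) = v"
    and "integral\<^sup>L (normal_meas v) (\<lambda>y. y ^ 4) = 3 * v ^ 2" by auto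
qed

lemma gauss_meas_lin:
  fixes d :: nat and t :: "nat \<Rightarrow> real" and mu :: "(nat \<Rightarrow> real) measure"
  assumes "sets mu = sets (PiM {..<d} (\<lambda>_. lborel))"
  shows "(\<lambda>x. \<Sum>i<d. t i * x i) \<in> borel_measurable mu"
proof -
  have h: "(\<lambda>x. \<Sum>i<d. t i * x i) \<in> borel_measurable (PiM {..<d} (\<lambda>_. lborel))"
  proof (rule borel_measurable_sum)
    fix i assume "i \<in> {..<d}"
    then have cm: "(\<lambda>x. x i :: real) \<in> borel_measurable (PiM {..<d} (\<lambda>_. lborel))"
      using measurable_component_singleton[of i "{..<d}" "\<lambda>_. lborel"] by simp
    show "(\<lambda>x. t i * x i) \<in> borel_measurable (PiM {..<d} (\<lambda>_. lborel))"
      using cm by measurable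
  qed
  show ?thesis using h measurable_cong_sets[OF assms refl, of borel] by blast
qed

lemma gauss_lin:
  assumes g: "gaussian_vec d Lam mu"
    and q: "(\<Sum>i<d. \<Sum>j<d. t i * Lam $$ (i, j) * t j) \<ge> 0"
  shows "integrable mu (\<lambda>x. (\<Sum>i<d. t i * x i) ^ n)"
    and "integral\<^sup>L mu (\<lambda>x. (\<Sum>i<d. t i * x i) ^ 2) = (\<Sum>i<d. \<Sum>j<d. t i * Lam $$ (i, j) * t j)"
    and "integral\<^sup>L mu (\<lambda>x. (\<Sum>i<d. t i * x i) ^ 4) = 3 * (\<Sum>i<d. \<Sum>j<d. t i * Lam $$ (i, j) * t j) ^ 2"
proof -
  let ?q = "(\<Sum>i<d. \<Sum>j<d. t i * Lam $$ (i, j) * t j)"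
  let ?L = "(\<lambda>x. \<Sum>i<d. t i * x i)"
  have sets: "sets mu = sets (PiM {..<d} (\<lambda>_. lborel))" using g by (simp add: gaussian_vec_def)
  have D: "distr mu lborel ?L = normal_meas ?q" using g by (simp add: gaussian_vec_def)
  have m: "?L \<in> mu \<rightarrow>\<^sub>M lborel" using gauss_meas_lin[OF sets] by simp
  have "integrable (distr mu lborel ?L) (\<lambda>y. y ^ n)"
    unfolding D by (rule normal_meas_facts(3)[OF q])
  then show "integrable mu (\<lambda>x. (?L x) ^ n)"
    using integrable_distr_eq[OF m, of "\<lambda>y. y ^ n"] by simp
  have "integral\<^sup>L (distr mu lborel ?L) (\<lambda>y. y ^ 2) = ?q"
    unfolding D by (rule normal_meas_facts(5)[OF q])
  then show "integral\<^sup>L mu (\<lambda>x. (?L x) ^ 2) = ?q"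
    using integral_distr[OF m, of "\<lambda>y. y ^ 2"] by simp
  have "integral\<^sup>L (distr mu lborel ?L) (\<lambda>y. y ^ 4) = 3 * ?q ^ 2"
    unfolding D by (rule normal_meas_facts(6)[OF q])
  then show "integral\<^sup>L mu (\<lambda>x. (?L x) ^ 4) = 3 * ?q ^ 2"
    using integral_distr[OF m, of "\<lambda>y. y ^ 4"] by simp
qed

lemma quad_expand:
 fixes Q L :: "nat \<Rightarrow> nat \<Rightarrow> real" and a :: "nat \<Rightarrow> real"
 shows "(\<Sum>i<d. \<Sum>j<d. (\<Sum>m<d. Q i m * a m) * L i j * (\<Sum>n<d. Q j n * a n)) =
   (\<Sum>m<d. \<Sum>n<d. a m * a n * (\<Sum>j<d. (\<Sum>i<d. Q i m * L i j) * Q j n))"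
proof -
  have "(\<Sum>i<d. \<Sum>j<d. (\<Sum>m<d. Q i m * a m) * L i j * (\<Sum>n<d. Q j n * a n))
     = (\<Sum>i<d. \<Sum>j<d. \<Sum>m<d. \<Sum>n<d. a m * a n * (Q i m * L i j * Q j n))"
    by (simp add: sum_distrib_left sum_distrib_right mult_ac)
  also have "\<dots> = (\<Sum>m<d. \<Sum>n<d. \<Sum>i<d. \<Sum>j<d. a m * a n * (Q i m * L i j * Q j n))"
  proof -
    let ?f = "\<lambda>i j m n. a m * a n * (Q i m * L i j * Q j n)"
    have "(\<Sum>i<d. \<Sum>j<d. \<Sum>m<d. \<Sum>n<d. ?f i j m n) = (\<Sum>i<d. \<Sum>m<d. \<Sum>j<d. \<Sum>n<d. ?f i j m n)"
      by (rule sum.cong[OF refl], rule sum.swap)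
    also have "\<dots> = (\<Sum>i<d. \<Sum>m<d. \<Sum>n<d. \<Sum>j<d. ?f i j m n)"
      by (rule sum.cong[OF refl], rule sum.cong[OF refl], rule sum.swap)
    also have "\<dots> = (\<Sum>m<d. \<Sum>i<d. \<Sum>n<d. \<Sum>j<d. ?f i j m n)"
      by (rule sum.swap)
    also have "\<dots> = (\<Sum>m<d. \<Sum>n<d. \<Sum>i<d. \<Sum>j<d. ?f i j m n)"
      by (rule sum.cong[OF refl], rule sum.swap)
    finally show ?thesis .
  qed
  also have "\<dots> = (\<Sum>m<d. \<Sum>n<d. a m * a n * (\<Sum>j<d. (\<Sum>i<d. Q i m * L i j) * Q j n))"
    by (intro sum.cong refl, subst sum.swap) (simp add: sum_distrib_left sum_distrib_right mult_ac)
  finally show ?thesis .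
qed
lemma QLQ:
  fixes Q :: "real mat" and lam :: "nat \<Rightarrow> real"
  assumes Qc: "Q \<in> carrier_mat d d" and QTQ: "transpose_mat Q * Q = 1\<^sub>m d"
  shows "transpose_mat Q * (Q * mat_diag d lam * transpose_mat Q) * Q = mat_diag d lam"
proof -
  have D: "mat_diag d lam \<in> carrier_mat d d" by (rule mat_diag_dim)
  have T: "transpose_mat Q \<in> carrier_mat d d" using Qc by simp
  have "transpose_mat Q * (Q * mat_diag d lam * transpose_mat Q) * Q
      = transpose_mat Q * (Q * mat_diag d lam * transpose_mat Q * Q)"
    using Qc D T by (intro assoc_mult_mat[of _ d d _ d _ d]) (auto intro!: mult_carrier_mat)
  also have "Q * mat_diag d lam * transpose_mat Q * Q = Q * mat_diag d lam * (transpose_mat Q * Q)"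
    using Qc D T by (intro assoc_mult_mat[of _ d d _ d _ d]) (auto intro!: mult_carrier_mat)
  also have "\<dots> = Q * mat_diag d lam" using QTQ by (simp add: right_mult_one_mat[OF mult_carrier_mat[OF Qc D]])
  also have "transpose_mat Q * (Q * mat_diag d lam) = (transpose_mat Q * Q) * mat_diag d lam"
    using Qc D T by (intro assoc_mult_mat[of _ d d _ d _ d, symmetric]) (auto intro!: mult_carrier_mat)
  also have "\<dots> = mat_diag d lam" using QTQ D by (simp add: left_mult_one_mat[OF D])
  finally show ?thesis .
qed

lemma QLQ_entry:
  fixes Q Lam :: "real mat"
  assumes Qc: "Q \<in> carrier_mat d d" and L: "Lam \<in> carrier_mat d d" and m: "m < d" and n: "n < d"
  shows "(transpose_mat Q * Lam * Q) $$ (m, n) = (\<Sum>j<d. (\<Sum>i<d. Q $$ (i, m) * Lam $$ (i, j)) * Q $$ (j, n))"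
  using assms by (simp add: scalar_prod_def lessThan_atLeast0 sum_distrib_right sum_distrib_left mult.assoc) (rule sum.swap)

lemma qform_diag:
  fixes Q Lam :: "real mat" and lam a :: "nat \<Rightarrow> real"
  assumes Qc: "Q \<in> carrier_mat d d" and QTQ: "transpose_mat Q * Q = 1\<^sub>m d"
    and LamD: "Lam = Q * mat_diag d lam * transpose_mat Q"
  shows "(\<Sum>i<d. \<Sum>j<d. (\<Sum>m<d. Q $$ (i, m) * a m) * Lam $$ (i, j) * (\<Sum>n<d. Q $$ (j, n) * a n))
     = (\<Sum>m<d. lam m * (a m)\<^sup>2)"
proof -
  have L: "Lam \<in> carrier_mat d d" using Qc LamD by (metis mult_carrier_mat mat_diag_dim transpose_carrier_mat)
  have E: "(\<Sum>j<d. (\<Sum>i<d. Q $$ (i, m) * Lam $$ (i, j)) * Q $$ (j, n)) = (if m = n then lam m else 0)"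
    if "m < d" "n < d" for m n
  proof -
    have "(transpose_mat Q * Lam * Q) $$ (m, n) = mat_diag d lam $$ (m, n)"
      using QLQ[OF Qc QTQ, of lam] LamD by simp
    also have "\<dots> = (if m = n then lam m else 0)" using that by (simp add: mat_diag_def)
    finally show ?thesis using QLQ_entry[OF Qc L that] by simp
  qed
  have "(\<Sum>i<d. \<Sum>j<d. (\<Sum>m<d. Q $$ (i, m) * a m) * Lam $$ (i, j) * (\<Sum>n<d. Q $$ (j, n) * a n))
     = (\<Sum>m<d. \<Sum>n<d. a m * a n * (\<Sum>j<d. (\<Sum>i<d. Q $$ (i, m) * Lam $$ (i, j)) * Q $$ (j, n)))"
    by (rule quad_expand[where Q="\<lambda>i m. Q $$ (i, m)" and L="\<lambda>i j. Lam $$ (i, j)"])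
  also have "\<dots> = (\<Sum>m<d. \<Sum>n<d. a m * a n * (if m = n then lam m else 0))"
    by (intro sum.cong refl) (simp add: E)
  also have "\<dots> = (\<Sum>m<d. lam m * (a m)\<^sup>2)"
    by (intro sum.cong refl) (simp add: if_distrib power2_eq_square mult_ac cong: if_cong)
  finally show ?thesis .
qed
definition zc :: "real mat \<Rightarrow> nat \<Rightarrow> nat \<Rightarrow> (nat \<Rightarrow> real) \<Rightarrow> real" where
  "zc Q d m x = (\<Sum>k<d. Q $$ (k, m) * x k)"

definition Sv :: "real mat \<Rightarrow> nat \<Rightarrow> (nat \<Rightarrow> real) \<Rightarrow> (nat \<Rightarrow> real) \<Rightarrow> real" where
  "Sv Q d a x = (\<Sum>m<d. a m * zc Q d m x)"

definition Vq :: "nat \<Rightarrow> (nat \<Rightarrow> real) \<Rightarrow> (nat \<Rightarrow> real) \<Rightarrow> (nat \<Rightarrow> real) \<Rightarrow> real" where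
  "Vq d lam a b = (\<Sum>m<d. lam m * a m * b m)"

lemma Sv_lin: "Sv Q d a x = (\<Sum>k<d. (\<Sum>m<d. Q $$ (k, m) * a m) * x k)"
  unfolding Sv_def zc_def
  by (simp add: sum_distrib_left sum_distrib_right mult_ac) (rule sum.swap)

lemma Sv_add: "Sv Q d (\<lambda>m. a m + b m) x = Sv Q d a x + Sv Q d b x"
  unfolding Sv_def by (simp add: distrib_right sum.distrib)

lemma Sv_diff: "Sv Q d (\<lambda>m. a m - b m) x = Sv Q d a x - Sv Q d b x"
  unfolding Sv_def by (simp add: left_diff_distrib sum_subtractf)

lemma Vq_add: "Vq d lam (\<lambda>m. a m + b m) (\<lambda>m. a m + b m) = Vq d lam a a + 2 * Vq d lam a b + Vq d lam b b"
  unfolding Vq_def by (simp add: algebra_simps sum.distrib sum_distrib_left)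

lemma Vq_diff: "Vq d lam (\<lambda>m. a m - b m) (\<lambda>m. a m - b m) = Vq d lam a a - 2 * Vq d lam a b + Vq d lam b b"
  unfolding Vq_def by (simp add: algebra_simps sum.distrib sum_distrib_left sum_subtractf)

locale gsetup =
  fixes d :: nat and Q Lam :: "real mat" and lam :: "nat \<Rightarrow> real" and mu :: "(nat \<Rightarrow> real) measure"
  assumes Qc: "Q \<in> carrier_mat d d" and QTQ: "transpose_mat Q * Q = 1\<^sub>m d"
    and LamD: "Lam = Q * mat_diag d lam * transpose_mat Q"
    and lam0: "\<And>i. i < d \<Longrightarrow> lam i \<ge> 0"
    and g: "gaussian_vec d Lam mu"
begin

lemma prob_mu: "prob_space mu" using g by (simp add: gaussian_vec_def)

lemma sets_mu: "sets mu = sets (PiM {..<d} (\<lambda>_. lborel))" using g by (simp add: gaussian_vec_def)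

lemma Sv_meas[measurable]: "Sv Q d a \<in> borel_measurable mu"
proof -
  have "(\<lambda>x. \<Sum>k<d. (\<Sum>m<d. Q $$ (k, m) * a m) * x k) \<in> borel_measurable mu"
    by (rule gauss_meas_lin[OF sets_mu])
  then show ?thesis by (simp add: Sv_lin[abs_def])
qed

lemma Vq_nonneg: "Vq d lam a a \<ge> 0"
  unfolding Vq_def using lam0 by (intro sum_nonneg) (simp add: mult.assoc mult_nonneg_nonneg)

lemma Z:
  shows "integrable mu (\<lambda>x. (Sv Q d a x) ^ n)"
    and "integral\<^sup>L mu (\<lambda>x. (Sv Q d a x) ^ 2) = Vq d lam a a"
    and "integral\<^sup>L mu (\<lambda>x. (Sv Q d a x) ^ 4) = 3 * (Vq d lam a a) ^ 2"
proof -
  let ?t = "\<lambda>k. \<Sum>m<d. Q $$ (k, m) * a m"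
  have q: "(\<Sum>i<d. \<Sum>j<d. ?t i * Lam $$ (i, j) * ?t j) = Vq d lam a a"
    unfolding qform_diag[OF Qc QTQ LamD] Vq_def by (simp add: power2_eq_square mult_ac)
  have q0: "(\<Sum>i<d. \<Sum>j<d. ?t i * Lam $$ (i, j) * ?t j) \<ge> 0" using q Vq_nonneg by simp
  show "integrable mu (\<lambda>x. (Sv Q d a x) ^ n)"
    unfolding Sv_lin by (rule gauss_lin(1)[OF g q0])
  show "integral\<^sup>L mu (\<lambda>x. (Sv Q d a x) ^ 2) = Vq d lam a a"
    unfolding Sv_lin using gauss_lin(2)[OF g q0] q by simp
  show "integral\<^sup>L mu (\<lambda>x. (Sv Q d a x) ^ 4) = 3 * (Vq d lam a a) ^ 2"
    unfolding Sv_lin using gauss_lin(3)[OF g q0] q by simp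
qed

lemma Z11:
  shows "integrable mu (\<lambda>x. Sv Q d a x * Sv Q d b x)"
    and "integral\<^sup>L mu (\<lambda>x. Sv Q d a x * Sv Q d b x) = Vq d lam a b"
proof -
  let ?p = "\<lambda>m. a m + b m" and ?m = "\<lambda>m. a m - b m"
  have eq: "Sv Q d a x * Sv Q d b x = ((Sv Q d ?p x)^2 - (Sv Q d ?m x)^2) / 4" for x
    by (simp add: Sv_add Sv_diff power2_eq_square algebra_simps)
  show "integrable mu (\<lambda>x. Sv Q d a x * Sv Q d b x)"
    unfolding eq using Z(1)[of ?p 2] Z(1)[of ?m 2] by simp
  show "integral\<^sup>L mu (\<lambda>x. Sv Q d a x * Sv Q d b x) = Vq d lam a b"
    unfolding eq using Z(1)[of ?p 2] Z(1)[of ?m 2] Z(2)[of ?p] Z(2)[of ?m]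
    by (simp add: Vq_add Vq_diff)
qed

lemma Z22:
  shows "integrable mu (\<lambda>x. (Sv Q d a x)^2 * (Sv Q d b x)^2)"
    and "integral\<^sup>L mu (\<lambda>x. (Sv Q d a x)^2 * (Sv Q d b x)^2)
          = Vq d lam a a * Vq d lam b b + 2 * (Vq d lam a b)^2"
proof -
  let ?p = "\<lambda>m. a m + b m" and ?m = "\<lambda>m. a m - b m"
  have eq: "(Sv Q d a x)^2 * (Sv Q d b x)^2 = ((Sv Q d ?p x)^4 + (Sv Q d ?m x)^4 - 2 * (Sv Q d a x)^4 - 2 * (Sv Q d b x)^4) / 12" for x
    by (simp add: Sv_add Sv_diff power2_eq_square power4_eq_xxxx algebra_simps)
  show "integrable mu (\<lambda>x. (Sv Q d a x)^2 * (Sv Q d b x)^2)"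
    unfolding eq using Z(1)[of ?p 4] Z(1)[of ?m 4] Z(1)[of a 4] Z(1)[of b 4] by simp
  have "integral\<^sup>L mu (\<lambda>x. (Sv Q d a x)^2 * (Sv Q d b x)^2) =
     (3 * (Vq d lam ?p ?p)^2 + 3 * (Vq d lam ?m ?m)^2 - 2 * (3 * (Vq d lam a a)^2) - 2 * (3 * (Vq d lam b b)^2)) / 12"
    unfolding eq using Z(1)[of ?p 4] Z(1)[of ?m 4] Z(1)[of a 4] Z(1)[of b 4] Z(3)[of ?p] Z(3)[of ?m] Z(3)[of a] Z(3)[of b]
    by (simp add: integrable_diff integrable_add integrable_mult_right)
  then show "integral\<^sup>L mu (\<lambda>x. (Sv Q d a x)^2 * (Sv Q d b x)^2)
          = Vq d lam a a * Vq d lam b b + 2 * (Vq d lam a b)^2"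
    by (simp add: Vq_add Vq_diff power2_eq_square algebra_simps)
qed

end


lemma abs_le_sq1: "\<bar>y::real\<bar> \<le> 1 + y^2"
proof -
  have "0 \<le> (\<bar>y\<bar> - 1/2)^2" by simp
  also have "(\<bar>y\<bar> - 1/2)^2 = y^2 - \<bar>y\<bar> + 1/4"
    by (simp add: power2_eq_square algebra_simps abs_mult_self_eq)
  finally show ?thesis by linarith
qed

lemma sq_int_imp_int:
  fixes f :: "'a \<Rightarrow> real"
  assumes "prob_space P" "f \<in> borel_measurable P" "integrable P (\<lambda>x. (f x)^2)"
  shows "integrable P f"
proof -
  interpret prob_space P by fact
  have i: "integrable P (\<lambda>x. 1 + (f x)^2)" using assms(3) by simp
  have b: "AE x in P. norm (f x) \<le> norm (1 + (f x)^2)"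
    by (rule AE_I2) (simp add: abs_le_sq1 order_trans[OF abs_le_sq1 abs_ge_self])
  show ?thesis by (rule Bochner_Integration.integrable_bound[OF i assms(2) b])
qed

lemma pim_single:
  fixes P :: "'a measure" and G :: "'a \<Rightarrow> real" and J :: "nat set"
  assumes P: "prob_space P" and i: "i \<in> J" and G: "G \<in> borel_measurable P"
  shows "integrable (PiM J (\<lambda>_. P)) (\<lambda>\<omega>. G (\<omega> i)) \<longleftrightarrow> integrable P G"
    and "integral\<^sup>L (PiM J (\<lambda>_. P)) (\<lambda>\<omega>. G (\<omega> i)) = integral\<^sup>L P G"
proof -
  interpret prob_space P by fact
  interpret PP: product_prob_space "\<lambda>_. P" J by unfold_locales
  have D: "distr (PiM J (\<lambda>_. P)) P (\<lambda>\<omega>. \<omega> i) = P" by (rule PP.PiM_component[OF i])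
  have m: "(\<lambda>\<omega>. \<omega> i) \<in> PiM J (\<lambda>_. P) \<rightarrow>\<^sub>M P" using i by simp
  show "integrable (PiM J (\<lambda>_. P)) (\<lambda>\<omega>. G (\<omega> i)) \<longleftrightarrow> integrable P G"
    using integrable_distr_eq[OF m G] D by simp
  show "integral\<^sup>L (PiM J (\<lambda>_. P)) (\<lambda>\<omega>. G (\<omega> i)) = integral\<^sup>L P G"
    using integral_distr[OF m G] D by simp
qed

lemma pim_pair:
  fixes P :: "'a measure" and G1 G2 :: "'a \<Rightarrow> real" and J :: "nat set"
  assumes P: "prob_space P" and J: "finite J" and i: "i \<in> J" and j: "j \<in> J" and ij: "i \<noteq> j"
    and G1: "integrable P G1" and G2: "integrable P G2"
  shows "integrable (PiM J (\<lambda>_. P)) (\<lambda>\<omega>. G1 (\<omega> i) * G2 (\<omega> j))"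
    and "integral\<^sup>L (PiM J (\<lambda>_. P)) (\<lambda>\<omega>. G1 (\<omega> i) * G2 (\<omega> j)) = integral\<^sup>L P G1 * integral\<^sup>L P G2"
proof -
  interpret prob_space P by fact
  interpret PP: product_prob_space "\<lambda>_. P" J by unfold_locales
  define F where "F k = (if k = i then G1 else if k = j then G2 else (\<lambda>_. 1::real))" for k
  have FI: "integrable P (F k)" for k using G1 G2 by (simp add: F_def)
  have eq: "(\<Prod>k\<in>J. F k (\<omega> k)) = G1 (\<omega> i) * G2 (\<omega> j)" for \<omega>
  proof -
    have "(\<Prod>k\<in>J. F k (\<omega> k)) = (\<Prod>k\<in>{i, j}. F k (\<omega> k))"
      using J i j by (intro prod.mono_neutral_right) (auto simp: F_def)
    also have "\<dots> = G1 (\<omega> i) * G2 (\<omega> j)" using ij by (simp add: F_def)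
    finally show ?thesis .
  qed
  have "integrable (PiM J (\<lambda>_. P)) (\<lambda>\<omega>. \<Prod>k\<in>J. F k (\<omega> k))"
    by (rule PP.product_integrable_prod[OF J FI])
  then show "integrable (PiM J (\<lambda>_. P)) (\<lambda>\<omega>. G1 (\<omega> i) * G2 (\<omega> j))" by (simp add: eq)
  have "integral\<^sup>L (PiM J (\<lambda>_. P)) (\<lambda>\<omega>. \<Prod>k\<in>J. F k (\<omega> k)) = (\<Prod>k\<in>J. integral\<^sup>L P (F k))"
    by (rule PP.product_integral_prod[OF J FI])
  also have "\<dots> = (\<Prod>k\<in>{i, j}. integral\<^sup>L P (F k))"
    using J i j by (intro prod.mono_neutral_right) (auto simp: F_def prob_space)
  also have "\<dots> = integral\<^sup>L P G1 * integral\<^sup>L P G2" using ij by (simp add: F_def)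
  finally show "integral\<^sup>L (PiM J (\<lambda>_. P)) (\<lambda>\<omega>. G1 (\<omega> i) * G2 (\<omega> j)) = integral\<^sup>L P G1 * integral\<^sup>L P G2"
    by (simp add: eq)
qed


lemma sum_if_diag:
  fixes A B :: "nat \<Rightarrow> real"
  assumes "finite J"
  shows "(\<Sum>i\<in>J. \<Sum>j\<in>J. (if i = j then A i else B i * B j)) = (\<Sum>j\<in>J. B j)^2 + (\<Sum>j\<in>J. A j - (B j)^2)"
proof -
  have "(\<Sum>i\<in>J. \<Sum>j\<in>J. (if i = j then A i else B i * B j)) =
        (\<Sum>i\<in>J. \<Sum>j\<in>J. (B i * B j + (if i = j then A i - (B i)^2 else 0)))"
    by (intro sum.cong refl) (simp add: power2_eq_square)
  also have "\<dots> = (\<Sum>i\<in>J. \<Sum>j\<in>J. B i * B j) + (\<Sum>i\<in>J. A i - (B i)^2)"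
    using assms by (simp add: sum.distrib)
  also have "(\<Sum>i\<in>J. \<Sum>j\<in>J. B i * B j) = (\<Sum>j\<in>J. B j)^2"
    by (simp add: power2_eq_square sum_product)
  finally show ?thesis .
qed

lemma pim_sumsq:
  fixes P :: "'a measure" and H :: "nat \<Rightarrow> 'a \<Rightarrow> real" and J :: "nat set"
  assumes P: "prob_space P" and J: "finite J" and Hm: "\<And>j. j \<in> J \<Longrightarrow> H j \<in> borel_measurable P"
    and H2: "\<And>j. j \<in> J \<Longrightarrow> integrable P (\<lambda>x. (H j x)^2)"
  shows "integrable (PiM J (\<lambda>_. P)) (\<lambda>\<omega>. (\<Sum>j\<in>J. H j (\<omega> j))^2)"
    and "integral\<^sup>L (PiM J (\<lambda>_. P)) (\<lambda>\<omega>. (\<Sum>j\<in>J. H j (\<omega> j))^2)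
       = (\<Sum>j\<in>J. integral\<^sup>L P (H j))^2 + (\<Sum>j\<in>J. integral\<^sup>L P (\<lambda>x. (H j x)^2) - (integral\<^sup>L P (H j))^2)"
proof -
  have sq: "(\<Sum>j\<in>J. H j (\<omega> j))^2 = (\<Sum>i\<in>J. \<Sum>j\<in>J. H i (\<omega> i) * H j (\<omega> j))" for \<omega>
    by (simp add: power2_eq_square sum_product)
  have H1: "integrable P (H j)" if "j \<in> J" for j
    by (rule sq_int_imp_int[OF P Hm[OF that] H2[OF that]])
  have T: "integrable (PiM J (\<lambda>_. P)) (\<lambda>\<omega>. H i (\<omega> i) * H j (\<omega> j)) \<and>
     integral\<^sup>L (PiM J (\<lambda>_. P)) (\<lambda>\<omega>. H i (\<omega> i) * H j (\<omega> j)) =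
     (if i = j then integral\<^sup>L P (\<lambda>x. (H i x)^2) else integral\<^sup>L P (H i) * integral\<^sup>L P (H j))"
    if i: "i \<in> J" and j: "j \<in> J" for i j
  proof (cases "i = j")
    case True
    have m: "(\<lambda>x. (H i x)^2) \<in> borel_measurable P" using Hm[OF i] by measurable
    show ?thesis using True pim_single[OF P i m] H2[OF i] by (simp add: power2_eq_square)
  next
    case False
    show ?thesis using False pim_pair[OF P J i j False H1[OF i] H1[OF j]] by simp
  qed
  show "integrable (PiM J (\<lambda>_. P)) (\<lambda>\<omega>. (\<Sum>j\<in>J. H j (\<omega> j))^2)"
    unfolding sq using T by (intro Bochner_Integration.integrable_sum) auto
  have "integral\<^sup>L (PiM J (\<lambda>_. P)) (\<lambda>\<omega>. (\<Sum>j\<in>J. H j (\<omega> j))^2)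
     = (\<Sum>i\<in>J. \<Sum>j\<in>J. integral\<^sup>L (PiM J (\<lambda>_. P)) (\<lambda>\<omega>. H i (\<omega> i) * H j (\<omega> j)))"
    unfolding sq using T by (simp add: Bochner_Integration.integral_sum Bochner_Integration.integrable_sum)
  also have "\<dots> = (\<Sum>i\<in>J. \<Sum>j\<in>J. (if i = j then integral\<^sup>L P (\<lambda>x. (H i x)^2) else integral\<^sup>L P (H i) * integral\<^sup>L P (H j)))"
    using T by (intro sum.cong refl) auto
  also have "\<dots> = (\<Sum>j\<in>J. integral\<^sup>L P (H j))^2 + (\<Sum>j\<in>J. integral\<^sup>L P (\<lambda>x. (H j x)^2) - (integral\<^sup>L P (H j))^2)"
    by (rule sum_if_diag[OF J])
  finally show "integral\<^sup>L (PiM J (\<lambda>_. P)) (\<lambda>\<omega>. (\<Sum>j\<in>J. H j (\<omega> j))^2)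
       = (\<Sum>j\<in>J. integral\<^sup>L P (H j))^2 + (\<Sum>j\<in>J. integral\<^sup>L P (\<lambda>x. (H j x)^2) - (integral\<^sup>L P (H j))^2)" .
qed



lemma WPV_carrier: "WPV_mat d u \<in> carrier_mat (d+1) (d+1)"
  unfolding WPV_mat_def by (rule four_block_carrier_mat) auto

lemma WKQ_carrier: "U \<in> carrier_mat d d \<Longrightarrow> WKQ_mat d U \<in> carrier_mat (d+1) (d+1)"
  unfolding WKQ_mat_def by (rule four_block_carrier_mat) auto

lemma WPV_entry: "i < d+1 \<Longrightarrow> j < d+1 \<Longrightarrow> WPV_mat d u $$ (i,j) = (if i = d \<and> j = d then u else 0)"
  unfolding WPV_mat_def by (auto simp: index_mat_four_block)

lemma WKQ_entry: "U \<in> carrier_mat d d \<Longrightarrow> i < d+1 \<Longrightarrow> j < d+1 \<Longrightarrow>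
   WKQ_mat d U $$ (i,j) = (if i < d \<and> j < d then U $$ (i,j) else 0)"
  unfolding WKQ_mat_def by (auto simp: index_mat_four_block)

lemma mult_entry:
  fixes A B :: "real mat"
  assumes "A \<in> carrier_mat n m" "B \<in> carrier_mat m p" "i < n" "j < p"
  shows "(A * B) $$ (i, j) = (\<Sum>k<m. A $$ (i, k) * B $$ (k, j))"
  using assms by (simp add: scalar_prod_def lessThan_atLeast0)

lemma lsa_formula:
  fixes E U :: "real mat"
  assumes E: "E \<in> carrier_mat (d+1) (M+1)" and U: "U \<in> carrier_mat d d"
  shows "lsa d M (WPV_mat d u) (WKQ_mat d U) E = E $$ (d, M) + (1 / real M) *
     (u * (\<Sum>j<M+1. E $$ (d, j) * (\<Sum>k<d. \<Sum>l<d. E $$ (k, j) * U $$ (k, l) * E $$ (l, M))))"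
proof -
  let ?P = "WPV_mat d u" and ?K = "WKQ_mat d U"
  have P: "?P \<in> carrier_mat (d+1) (d+1)" by (rule WPV_carrier)
  have K: "?K \<in> carrier_mat (d+1) (d+1)" by (rule WKQ_carrier[OF U])
  have PE: "(?P * E) $$ (d, j) = u * E $$ (d, j)" if "j < M+1" for j
  proof -
    have "(?P * E) $$ (d, j) = (\<Sum>k<d+1. ?P $$ (d, k) * E $$ (k, j))"
      by (rule mult_entry[OF P E]) (use that in auto)
    also have "\<dots> = u * E $$ (d, j)"
      by (simp add: WPV_entry if_distrib cong: if_cong)
    finally show ?thesis .
  qed
  have TE: "(transpose_mat E * ?K * E) $$ (j, M) = (\<Sum>k<d. \<Sum>l<d. E $$ (k, j) * U $$ (k, l) * E $$ (l, M))" if "j < M+1" for j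
  proof -
    have ET: "transpose_mat E \<in> carrier_mat (M+1) (d+1)" using E by simp
    have EK: "transpose_mat E * ?K \<in> carrier_mat (M+1) (d+1)" using ET K by simp
    have "(transpose_mat E * ?K * E) $$ (j, M) = (\<Sum>l<d+1. (transpose_mat E * ?K) $$ (j, l) * E $$ (l, M))"
      by (rule mult_entry[OF EK E that]) simp
    also have "\<dots> = (\<Sum>l<d+1. (\<Sum>k<d+1. E $$ (k, j) * ?K $$ (k, l)) * E $$ (l, M))"
      by (intro sum.cong refl, subst mult_entry[OF ET K that]) (use E that in auto)
    also have "\<dots> = (\<Sum>l<d+1. (\<Sum>k<d+1. E $$ (k, j) * (if k < d \<and> l < d then U $$ (k,l) else 0)) * E $$ (l, M))"
      using U by (intro sum.cong refl) (simp add: WKQ_entry)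
    also have "\<dots> = (\<Sum>l<d. (\<Sum>k<d. E $$ (k, j) * U $$ (k,l)) * E $$ (l, M))"
      by simp
    also have "\<dots> = (\<Sum>k<d. \<Sum>l<d. E $$ (k, j) * U $$ (k, l) * E $$ (l, M))"
      by (simp add: sum_distrib_right) (rule sum.swap)
    finally show ?thesis .
  qed
  have "(?P * E * (transpose_mat E * ?K * E)) $$ (d, M) = (\<Sum>j<M+1. (?P * E) $$ (d, j) * (transpose_mat E * ?K * E) $$ (j, M))"
    by (rule mult_entry[of _ "d+1" "M+1" _ "M+1"]) (use P E K in auto)
  also have "\<dots> = u * (\<Sum>j<M+1. E $$ (d, j) * (\<Sum>k<d. \<Sum>l<d. E $$ (k, j) * U $$ (k, l) * E $$ (l, M)))"
    by (subst sum_distrib_left, intro sum.cong refl) (simp add: PE TE del: sum.lessThan_Suc)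
  finally have X: "(?P * E * (transpose_mat E * ?K * E)) $$ (d, M) = u * (\<Sum>j<M+1. E $$ (d, j) * (\<Sum>k<d. \<Sum>l<d. E $$ (k, j) * U $$ (k, l) * E $$ (l, M)))" .
  show ?thesis
    unfolding lsa_def using X P E K by simp
qed

lemma QVQ_entry:
  fixes Q :: "real mat"
  assumes Qc: "Q \<in> carrier_mat d d" and k: "k < d" and l: "l < d"
  shows "(Q * mat_diag d v * transpose_mat Q) $$ (k, l) = (\<Sum>n<d. Q $$ (k, n) * v n * Q $$ (l, n))"
proof -
  have QV: "Q * mat_diag d v \<in> carrier_mat d d" using Qc by (simp add: mat_diag_dim)
  have "(Q * mat_diag d v * transpose_mat Q) $$ (k, l) = (\<Sum>n<d. (Q * mat_diag d v) $$ (k, n) * transpose_mat Q $$ (n, l))"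
    by (rule mult_entry[OF QV _ k l]) (use Qc in simp)
  also have "\<dots> = (\<Sum>n<d. Q $$ (k, n) * v n * Q $$ (l, n))"
    using Qc k l by (intro sum.cong refl) (simp add: mat_diag_mult_right)
  finally show ?thesis .
qed

lemma bil:
  "(\<Sum>k<d. \<Sum>l<d. x k * (\<Sum>n<d. Q $$ (k, n) * v n * Q $$ (l, n)) * y l)
    = (\<Sum>n<d. v n * zc Q d n x * zc Q d n y)"
proof -
  have "(\<Sum>k<d. \<Sum>l<d. x k * (\<Sum>n<d. Q $$ (k, n) * v n * Q $$ (l, n)) * y l)
      = (\<Sum>k<d. \<Sum>l<d. \<Sum>n<d. v n * ((Q $$ (k, n) * x k) * (Q $$ (l, n) * y l)))"
    by (simp add: sum_distrib_left sum_distrib_right mult_ac)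
  also have "\<dots> = (\<Sum>k<d. \<Sum>n<d. \<Sum>l<d. v n * ((Q $$ (k, n) * x k) * (Q $$ (l, n) * y l)))"
    by (rule sum.cong[OF refl], rule sum.swap)
  also have "\<dots> = (\<Sum>n<d. \<Sum>k<d. \<Sum>l<d. v n * ((Q $$ (k, n) * x k) * (Q $$ (l, n) * y l)))"
    by (rule sum.swap)
  also have "\<dots> = (\<Sum>n<d. v n * zc Q d n x * zc Q d n y)"
    unfolding zc_def by (simp add: sum_distrib_left sum_distrib_right mult_ac)
  finally show ?thesis .
qed

lemma wdot:
  fixes Q :: "real mat"
  assumes Qc: "Q \<in> carrier_mat d d" and av: "av \<in> carrier_vec d"
  shows "(Q *\<^sub>v av) \<bullet> vec d x = Sv Q d (\<lambda>m. av $ m) x"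
  unfolding Sv_lin using Qc av
  by (simp add: scalar_prod_def lessThan_atLeast0 mult_ac)

lemma rearr:
  fixes Y :: "nat \<Rightarrow> real" and Z :: "nat \<Rightarrow> nat \<Rightarrow> real"
  shows "(1 / real M) * (\<Sum>j<M. Y j * (\<Sum>n<d. v n * Z j n * zq n)) - (\<Sum>m<d. a m * zq m)
     = (\<Sum>m<d. ((1 / real M) * (\<Sum>j<M. Y j * v m * Z j m) - a m) * zq m)"
proof -
  have "(\<Sum>j<M. Y j * (\<Sum>n<d. v n * Z j n * zq n)) = (\<Sum>j<M. \<Sum>n<d. Y j * v n * Z j n * zq n)"
    by (simp add: sum_distrib_left mult_ac)
  also have "\<dots> = (\<Sum>n<d. \<Sum>j<M. Y j * v n * Z j n * zq n)" by (rule sum.swap)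
  finally have A: "(\<Sum>j<M. Y j * (\<Sum>n<d. v n * Z j n * zq n)) = \<dots>" .
  have B: "(\<Sum>m<d. ((1 / real M) * S m - a m) * zq m) = (1 / real M) * (\<Sum>m<d. S m * zq m) - (\<Sum>m<d. a m * zq m)" for S :: "nat \<Rightarrow> real"
  proof -
    have "(\<Sum>m<d. ((1 / real M) * S m - a m) * zq m) = (\<Sum>m<d. (1 / real M) * (S m * zq m) - a m * zq m)"
      by (intro sum.cong refl) (simp add: algebra_simps)
    also have "\<dots> = (1 / real M) * (\<Sum>m<d. S m * zq m) - (\<Sum>m<d. a m * zq m)"
      by (simp only: sum_subtractf sum_distrib_left)
    finally show ?thesis .
  qed
  have C: "(\<Sum>m<d. (\<Sum>j<M. Y j * v m * Z j m) * zq m) = (\<Sum>n<d. \<Sum>j<M. Y j * v n * Z j n * zq n)"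
    by (simp add: sum_distrib_right)
  show ?thesis
    unfolding A B C ..
qed

lemma integrand_eq:
  fixes Q :: "real mat" and v :: "nat \<Rightarrow> real"
  assumes Qc: "Q \<in> carrier_mat d d" and c: "c \<noteq> 0" and av: "av \<in> carrier_vec d"
    and M: "M \<ge> 1"
  shows "(lsa d M (WPV_mat d (1/c)) (WKQ_mat d (c \<cdot>\<^sub>m (Q * mat_diag d v * transpose_mat Q)))
            (prompt_mat d M (Q *\<^sub>v av) xs xq es) - (Q *\<^sub>v av) \<bullet> vec d xq)
       = Sv Q d (\<lambda>m. (1 / real M) * (\<Sum>j<M. (Sv Q d (\<lambda>m. av $ m) (xs j) + es j) * v m * zc Q d m (xs j)) - av $ m) xq"
proof -
  let ?U = "c \<cdot>\<^sub>m (Q * mat_diag d v * transpose_mat Q)"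
  let ?E = "prompt_mat d M (Q *\<^sub>v av) xs xq es"
  let ?a = "\<lambda>m. av $ m"
  have U: "?U \<in> carrier_mat d d" using Qc by (metis smult_carrier_mat mult_carrier_mat mat_diag_dim transpose_carrier_mat)
  have E: "?E \<in> carrier_mat (d+1) (M+1)" by (simp add: prompt_mat_def)
  have Uent: "?U $$ (k, l) = c * (\<Sum>n<d. Q $$ (k, n) * v n * Q $$ (l, n))" if "k < d" "l < d" for k l
    using QVQ_entry[OF Qc that] that Qc by (simp add: mat_diag_dim)
  have Eent1: "?E $$ (k, j) = xs j k" if "k < d" "j < M" for k j using that by (simp add: prompt_mat_def)
  have Eent2: "?E $$ (k, M) = xq k" if "k < d" for k using that by (simp add: prompt_mat_def)
  have Eent3: "?E $$ (d, j) = Sv Q d ?a (xs j) + es j" if "j < M" for j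
    using that wdot[OF Qc av] by (simp add: prompt_mat_def)
  have Eent4: "?E $$ (d, M) = 0" by (simp add: prompt_mat_def)
  have inner: "(\<Sum>k<d. \<Sum>l<d. ?E $$ (k, j) * ?U $$ (k, l) * ?E $$ (l, M)) = c * (\<Sum>n<d. v n * zc Q d n (xs j) * zc Q d n xq)"
    if "j < M" for j
  proof -
    have "(\<Sum>k<d. \<Sum>l<d. ?E $$ (k, j) * ?U $$ (k, l) * ?E $$ (l, M)) =
          (\<Sum>k<d. \<Sum>l<d. c * (xs j k * (\<Sum>n<d. Q $$ (k, n) * v n * Q $$ (l, n)) * xq l))"
      using that by (intro sum.cong refl) (simp add: Uent Eent1 Eent2)
    also have "\<dots> = c * (\<Sum>k<d. \<Sum>l<d. xs j k * (\<Sum>n<d. Q $$ (k, n) * v n * Q $$ (l, n)) * xq l)"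
      by (simp add: sum_distrib_left)
    also have "\<dots> = c * (\<Sum>n<d. v n * zc Q d n (xs j) * zc Q d n xq)"
      by (simp add: bil)
    finally show ?thesis .
  qed
  have "lsa d M (WPV_mat d (1/c)) (WKQ_mat d ?U) ?E =
     (1 / real M) * ((1/c) * (\<Sum>j<M. ?E $$ (d, j) * (\<Sum>k<d. \<Sum>l<d. ?E $$ (k, j) * ?U $$ (k, l) * ?E $$ (l, M))))"
    using lsa_formula[OF E U, of "1/c"] Eent4 by simp
  also have "(\<Sum>j<M. ?E $$ (d, j) * (\<Sum>k<d. \<Sum>l<d. ?E $$ (k, j) * ?U $$ (k, l) * ?E $$ (l, M)))
      = (\<Sum>j<M. (Sv Q d ?a (xs j) + es j) * (c * (\<Sum>n<d. v n * zc Q d n (xs j) * zc Q d n xq)))"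
    by (intro sum.cong refl) (simp add: inner Eent3)
  also have "\<dots> = c * (\<Sum>j<M. (Sv Q d ?a (xs j) + es j) * (\<Sum>n<d. v n * zc Q d n (xs j) * zc Q d n xq))"
    by (simp add: sum_distrib_left mult_ac)
  also have "(1 / real M) * ((1/c) * (c * (\<Sum>j<M. (Sv Q d ?a (xs j) + es j) * (\<Sum>n<d. v n * zc Q d n (xs j) * zc Q d n xq))))
     = (1 / real M) * (\<Sum>j<M. (Sv Q d ?a (xs j) + es j) * (\<Sum>n<d. v n * zc Q d n (xs j) * zc Q d n xq))"
    using c by simp
  finally have L: "lsa d M (WPV_mat d (1/c)) (WKQ_mat d ?U) ?E = \<dots>" .
  have R1: "Sv Q d (\<lambda>m. (1 / real M) * (\<Sum>j<M. (Sv Q d ?a (xs j) + es j) * v m * zc Q d m (xs j)) - av $ m) xq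
     = (\<Sum>m<d. ((1 / real M) * (\<Sum>j<M. (Sv Q d ?a (xs j) + es j) * v m * zc Q d m (xs j)) - av $ m) * zc Q d m xq)"
    by (rule Sv_def)
  have R2: "Sv Q d ?a xq = (\<Sum>m<d. av $ m * zc Q d m xq)" by (rule Sv_def)
  show ?thesis
    unfolding L wdot[OF Qc av] R1 R2
    by (rule rearr)
qed


lemma qnorm2_diag:
  assumes x: "x \<in> carrier_vec d"
  shows "qnorm2 (mat_diag d f) x = (\<Sum>i<d. f i * (x $ i)^2)"
proof -
  have e: "(mat_diag d f *\<^sub>v x) $ i = f i * x $ i" if "i < d" for i
  proof -
    have "(mat_diag d f *\<^sub>v x) $ i = (\<Sum>j<d. (if i = j then f j else 0) * x $ j)"
      using that x by (simp add: mat_diag_def scalar_prod_def lessThan_atLeast0 row_def)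
    also have "\<dots> = (\<Sum>j<d. (if i = j then f j * x $ j else 0))"
      by (intro sum.cong refl) simp
    also have "\<dots> = f i * x $ i" using that by simp
    finally show ?thesis .
  qed
  have dr: "dim_vec (mat_diag d f *\<^sub>v x) = d" by (simp add: mat_diag_def)
  have "qnorm2 (mat_diag d f) x = (\<Sum>i<d. x $ i * (mat_diag d f *\<^sub>v x) $ i)"
    unfolding qnorm2_def scalar_prod_def dr lessThan_atLeast0 ..
  also have "\<dots> = (\<Sum>i<d. f i * (x $ i)^2)"
    by (intro sum.cong refl) (simp add: e power2_eq_square)
  finally show ?thesis .
qed

lemma mat_tr_diag: "mat_tr (mat_diag d f) = (\<Sum>i<d. f i)"
  unfolding mat_tr_def by (simp add: mat_diag_def)



lemma nu_meas:
  assumes "(f :: real \<Rightarrow> real) \<in> borel_measurable borel" "v \<ge> 0"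
  shows "f \<in> borel_measurable (normal_meas v)"
proof -
  have "sets (normal_meas v) = sets borel" using normal_meas_facts(2)[OF assms(2)] by simp
  from measurable_cong_sets[OF this refl, of "borel :: real measure"] assms(1) show ?thesis by simp
qed

lemma nu_affine:
  fixes c0 c1 v :: real assumes v: "v \<ge> 0"
  shows "integrable (normal_meas v) (\<lambda>e. (c0 + c1 * e)^2)"
    and "integral\<^sup>L (normal_meas v) (\<lambda>e. (c0 + c1 * e)^2) = c0^2 + c1^2 * v"
    and "integral\<^sup>L (normal_meas v) (\<lambda>e. c0 + c1 * e) = c0"
proof -
  interpret prob_space "normal_meas v" by (rule normal_meas_facts(1)[OF v])
  have i1: "integrable (normal_meas v) (\<lambda>y. y)" using normal_meas_facts(3)[OF v, of 1] by simp
  have i2: "integrable (normal_meas v) (\<lambda>y. y^2)" using normal_meas_facts(3)[OF v, of 2] by simp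
  have eq: "(c0 + c1 * e)^2 = c0^2 + (2 * c0 * c1) * e + c1^2 * e^2" for e
    by (simp add: power2_eq_square algebra_simps)
  show "integrable (normal_meas v) (\<lambda>e. (c0 + c1 * e)^2)"
    unfolding eq using i1 i2 by simp
  show "integral\<^sup>L (normal_meas v) (\<lambda>e. (c0 + c1 * e)^2) = c0^2 + c1^2 * v"
    unfolding eq using i1 i2 normal_meas_facts(4,5)[OF v] by (simp add: prob_space)
  show "integral\<^sup>L (normal_meas v) (\<lambda>e. c0 + c1 * e) = c0"
    using i1 normal_meas_facts(4)[OF v] by (simp add: prob_space)
qed

lemma es_step:
  fixes \<alpha> \<beta> :: "nat \<Rightarrow> real" and A \<sigma> :: real and M :: nat
  assumes s: "\<sigma> \<ge> 0" and M: "M \<ge> 1"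
  shows "integrable (PiM {..<M} (\<lambda>_. normal_meas (\<sigma>^2)))
           (\<lambda>es. ((1 / real M) * (\<Sum>j<M. (\<alpha> j + es j) * \<beta> j) - A)^2)"
    and "integral\<^sup>L (PiM {..<M} (\<lambda>_. normal_meas (\<sigma>^2)))
           (\<lambda>es. ((1 / real M) * (\<Sum>j<M. (\<alpha> j + es j) * \<beta> j) - A)^2)
       = ((1 / real M) * (\<Sum>j<M. \<alpha> j * \<beta> j) - A)^2 + \<sigma>^2 * (\<Sum>j<M. (\<beta> j / real M)^2)"
proof -
  let ?nu = "normal_meas (\<sigma>^2)"
  have v: "\<sigma>^2 \<ge> 0" by simp
  define c0 where "c0 j = \<alpha> j * \<beta> j / real M - A / real M" for j
  define c1 where "c1 j = \<beta> j / real M" for j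
  define H where "H j e = c0 j + c1 j * e" for j e
  have Mpos: "real M > 0" using M by simp
  have sumA: "(\<Sum>j<M. A / real M) = A" using Mpos by simp
  have pt: "(1 / real M) * (\<Sum>j<M. (\<alpha> j + es j) * \<beta> j) - A = (\<Sum>j<M. H j (es j))" for es
  proof -
    have "(\<Sum>j<M. H j (es j)) = (\<Sum>j<M. (\<alpha> j + es j) * \<beta> j / real M - A / real M)"
      by (intro sum.cong refl) (simp add: H_def c0_def c1_def algebra_simps add_divide_distrib diff_divide_distrib)
    also have "\<dots> = (1 / real M) * (\<Sum>j<M. (\<alpha> j + es j) * \<beta> j) - (\<Sum>j<M. A / real M)"
      by (simp add: sum_subtractf sum_divide_distrib)
    finally show ?thesis using sumA by simp
  qed
  have Hm: "H j \<in> borel_measurable ?nu" for j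
    unfolding H_def by (rule nu_meas[OF _ v]) simp
  have H2: "integrable ?nu (\<lambda>x. (H j x)^2)" for j
    unfolding H_def by (rule nu_affine(1)[OF v])
  note S = pim_sumsq[OF normal_meas_facts(1)[OF v] _ Hm H2, of "{..<M}"]
  show "integrable (PiM {..<M} (\<lambda>_. ?nu)) (\<lambda>es. ((1 / real M) * (\<Sum>j<M. (\<alpha> j + es j) * \<beta> j) - A)^2)"
    unfolding pt using S(1) by simp
  have "integral\<^sup>L (PiM {..<M} (\<lambda>_. ?nu)) (\<lambda>es. ((1 / real M) * (\<Sum>j<M. (\<alpha> j + es j) * \<beta> j) - A)^2)
      = (\<Sum>j<M. c0 j)^2 + (\<Sum>j<M. (c0 j ^2 + c1 j^2 * \<sigma>^2) - (c0 j)^2)"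
    unfolding pt using S(2) by (simp add: H_def nu_affine(2,3)[OF v])
  also have "(\<Sum>j<M. c0 j) = (1 / real M) * (\<Sum>j<M. \<alpha> j * \<beta> j) - A"
    using sumA by (simp add: c0_def sum_subtractf sum_divide_distrib)
  also have "(\<Sum>j<M. (c0 j ^2 + c1 j^2 * \<sigma>^2) - (c0 j)^2) = \<sigma>^2 * (\<Sum>j<M. (\<beta> j / real M)^2)"
    by (simp add: c1_def sum_distrib_left mult_ac)
  finally show "integral\<^sup>L (PiM {..<M} (\<lambda>_. ?nu)) (\<lambda>es. ((1 / real M) * (\<Sum>j<M. (\<alpha> j + es j) * \<beta> j) - A)^2)
       = ((1 / real M) * (\<Sum>j<M. \<alpha> j * \<beta> j) - A)^2 + \<sigma>^2 * (\<Sum>j<M. (\<beta> j / real M)^2)" .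
qed


definition dl :: "nat \<Rightarrow> nat \<Rightarrow> real" where "dl m k = (if k = m then 1 else 0)"

lemma zc_Sv: "m < d \<Longrightarrow> zc Q d m x = Sv Q d (dl m) x"
proof -
  assume m: "m < d"
  have "Sv Q d (dl m) x = (\<Sum>k<d. (if k = m then zc Q d k x else 0))"
    unfolding Sv_def dl_def by (intro sum.cong refl) simp
  then show ?thesis using m by simp
qed

lemma Vq_dl1: "m < d \<Longrightarrow> Vq d lam a (dl m) = lam m * a m"
proof -
  assume m: "m < d"
  have "Vq d lam a (dl m) = (\<Sum>k<d. (if k = m then lam k * a k else 0))"
    unfolding Vq_def dl_def by (intro sum.cong refl) simp
  then show ?thesis using m by simp
qed

lemma Vq_dl2: "m < d \<Longrightarrow> Vq d lam (dl m) (dl m) = lam m"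
proof -
  assume m: "m < d"
  have "Vq d lam (dl m) (dl m) = (\<Sum>k<d. (if k = m then lam k else 0))"
    unfolding Vq_def dl_def by (intro sum.cong refl) simp
  then show ?thesis using m by simp
qed

context gsetup
begin

lemma xs_step:
  fixes M :: nat and vm :: real and a :: "nat \<Rightarrow> real"
  assumes m: "m < d" and M: "M \<ge> 1"
  shows "integrable (PiM {..<M} (\<lambda>_. mu))
           (\<lambda>xs. ((1 / real M) * (\<Sum>j<M. Sv Q d a (xs j) * vm * zc Q d m (xs j)) - a m)^2)"
    and "integral\<^sup>L (PiM {..<M} (\<lambda>_. mu))
           (\<lambda>xs. ((1 / real M) * (\<Sum>j<M. Sv Q d a (xs j) * vm * zc Q d m (xs j)) - a m)^2)
       = (vm * lam m * a m - a m)^2 + (1 / real M) * (vm^2 * (Vq d lam a a * lam m + 2 * (lam m * a m)^2)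
            - 2 * vm * a m * (lam m * a m) + (a m)^2 - (vm * lam m * a m - a m)^2)"
proof -
  interpret P: prob_space mu by (rule prob_mu)
  have Mpos: "real M > 0" using M by simp
  define K where "K x = (vm * (Sv Q d a x * Sv Q d (dl m) x) - a m) / real M" for x
  have sumA: "(\<Sum>j<M. a m / real M) = a m" using Mpos by simp
  have pt: "(1 / real M) * (\<Sum>j<M. Sv Q d a (xs j) * vm * zc Q d m (xs j)) - a m = (\<Sum>j<M. K (xs j))" for xs
  proof -
    have "(\<Sum>j<M. K (xs j)) = (\<Sum>j<M. Sv Q d a (xs j) * vm * zc Q d m (xs j) / real M - a m / real M)"
      by (intro sum.cong refl) (simp add: K_def zc_Sv[OF m] diff_divide_distrib mult_ac)
    also have "\<dots> = (1 / real M) * (\<Sum>j<M. Sv Q d a (xs j) * vm * zc Q d m (xs j)) - (\<Sum>j<M. a m / real M)"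
      by (simp add: sum_subtractf sum_divide_distrib)
    finally show ?thesis using sumA by simp
  qed
  have Km: "K \<in> borel_measurable mu" unfolding K_def by measurable
  have K2eq: "(K x)^2 = (vm^2 * ((Sv Q d a x)^2 * (Sv Q d (dl m) x)^2) - (2 * vm * a m) * (Sv Q d a x * Sv Q d (dl m) x) + (a m)^2) / (real M)^2" for x
    unfolding K_def by (simp add: power2_eq_square field_simps)
  have Keq: "K x = (vm * (Sv Q d a x * Sv Q d (dl m) x) - a m) / real M" for x by (simp add: K_def)
  have K2: "integrable mu (\<lambda>x. (K x)^2)"
    unfolding K2eq using Z22(1)[of a "dl m"] Z11(1)[of a "dl m"] by simp
  have IK: "integral\<^sup>L mu K = (vm * lam m * a m - a m) / real M"
    unfolding Keq using Z11[of a "dl m"] Vq_dl1[OF m] prob_space.prob_space[OF prob_mu]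
    by (simp add: mult_ac)
  have IK2: "integral\<^sup>L mu (\<lambda>x. (K x)^2) = (vm^2 * (Vq d lam a a * lam m + 2 * (lam m * a m)^2)
            - 2 * vm * a m * (lam m * a m) + (a m)^2) / (real M)^2"
    unfolding K2eq using Z22[of a "dl m"] Z11[of a "dl m"] Vq_dl1[OF m] Vq_dl2[OF m] prob_space.prob_space[OF prob_mu]
    by simp
  note S = pim_sumsq[OF prob_mu _ Km K2, of "{..<M}"]
  show "integrable (PiM {..<M} (\<lambda>_. mu))
           (\<lambda>xs. ((1 / real M) * (\<Sum>j<M. Sv Q d a (xs j) * vm * zc Q d m (xs j)) - a m)^2)"
    unfolding pt using S(1) by simp
  have "integral\<^sup>L (PiM {..<M} (\<lambda>_. mu))
           (\<lambda>xs. ((1 / real M) * (\<Sum>j<M. Sv Q d a (xs j) * vm * zc Q d m (xs j)) - a m)^2)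
     = (real M * integral\<^sup>L mu K)^2 + real M * (integral\<^sup>L mu (\<lambda>x. (K x)^2) - (integral\<^sup>L mu K)^2)"
    unfolding pt using S(2) by simp
  also have "\<dots> = (vm * lam m * a m - a m)^2 + (1 / real M) * (vm^2 * (Vq d lam a a * lam m + 2 * (lam m * a m)^2)
            - 2 * vm * a m * (lam m * a m) + (a m)^2 - (vm * lam m * a m - a m)^2)"
    unfolding IK IK2 using Mpos by (simp add: field_simps power2_eq_square)
  finally show "integral\<^sup>L (PiM {..<M} (\<lambda>_. mu))
           (\<lambda>xs. ((1 / real M) * (\<Sum>j<M. Sv Q d a (xs j) * vm * zc Q d m (xs j)) - a m)^2)
       = (vm * lam m * a m - a m)^2 + (1 / real M) * (vm^2 * (Vq d lam a a * lam m + 2 * (lam m * a m)^2)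
            - 2 * vm * a m * (lam m * a m) + (a m)^2 - (vm * lam m * a m - a m)^2)" .
qed

lemma xs_step2:
  fixes M :: nat and vm :: real
  assumes m: "m < d"
  shows "integrable (PiM {..<M} (\<lambda>_. mu)) (\<lambda>xs. \<Sum>j<M. (vm * zc Q d m (xs j) / real M)^2)"
    and "integral\<^sup>L (PiM {..<M} (\<lambda>_. mu)) (\<lambda>xs. \<Sum>j<M. (vm * zc Q d m (xs j) / real M)^2)
       = real M * ((vm / real M)^2 * lam m)"
proof -
  define G where "G x = (vm / real M)^2 * (Sv Q d (dl m) x)^2" for x
  have eq: "(vm * zc Q d m x / real M)^2 = G x" for x
    by (simp add: G_def zc_Sv[OF m] power2_eq_square field_simps)
  have Gm: "G \<in> borel_measurable mu" unfolding G_def by measurable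
  have GI: "integrable mu G" unfolding G_def using Z(1)[of "dl m" 2] by simp
  have GV: "integral\<^sup>L mu G = (vm / real M)^2 * lam m"
    unfolding G_def using Z(2)[of "dl m"] Vq_dl2[OF m] by simp
  have T: "integrable (PiM {..<M} (\<lambda>_. mu)) (\<lambda>xs. G (xs j)) \<and>
           integral\<^sup>L (PiM {..<M} (\<lambda>_. mu)) (\<lambda>xs. G (xs j)) = (vm / real M)^2 * lam m" if "j \<in> {..<M}" for j
    using pim_single[OF prob_mu that Gm] GI GV by simp
  show "integrable (PiM {..<M} (\<lambda>_. mu)) (\<lambda>xs. \<Sum>j<M. (vm * zc Q d m (xs j) / real M)^2)"
    unfolding eq using T by (intro Bochner_Integration.integrable_sum) auto
  show "integral\<^sup>L (PiM {..<M} (\<lambda>_. mu)) (\<lambda>xs. \<Sum>j<M. (vm * zc Q d m (xs j) / real M)^2)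
       = real M * ((vm / real M)^2 * lam m)"
    unfolding eq using T by (simp add: Bochner_Integration.integral_sum)
qed

end


lemma term_id:
  fixes M lam v a A s2 \<xi> s R :: real
  assumes M: "M > 0"
    and c: "(a = s \<and> \<xi> = 0 \<and> R = s^2 * lam * (lam * v - 1)^2) \<or> (a = \<xi> \<and> s = 0 \<and> v = 0 \<and> R = 0)"
  shows "lam * ((v * lam * a - a)^2 + (1 / M) * (v^2 * (A * lam + 2 * (lam * a)^2)
            - 2 * v * a * (lam * a) + a^2 - (v * lam * a - a)^2) + s2 * (M * ((v / M)^2 * lam)))
       = 1 / M * (v * v * lam * lam * lam * s^2) + 1 / M * (A + s2) * (v * v * lam * lam) + lam * \<xi>^2 + R"
  using c
proof
  assume h: "a = s \<and> \<xi> = 0 \<and> R = s^2 * lam * (lam * v - 1)^2"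
  then have h1: "a = s" and h2: "\<xi> = 0" and h3: "R = s^2 * lam * (lam * v - 1)^2" by auto
  show ?thesis unfolding h1 h2 h3 using M by (simp add: field_simps power2_eq_square)
next
  assume h: "a = \<xi> \<and> s = 0 \<and> v = 0 \<and> R = 0"
  then have h1: "a = \<xi>" and h2: "s = 0" and h3: "v = 0" and h4: "R = 0" by auto
  show ?thesis unfolding h1 h2 h3 h4 using M by (simp add: field_simps power2_eq_square)
qed

theorem theorem4p3:
  fixes d N M r :: nat and \<sigma> c :: real and lam :: "nat \<Rightarrow> real"
    and Q Lam :: "real mat" and w s \<xi> :: "real vec"
    and mu :: "(nat \<Rightarrow> real) measure" and nu :: "real measure"
  assumes "d \<ge> 1" "N \<ge> 1" "M \<ge> 1" "r \<le> d" "\<sigma> \<ge> 0" "c \<noteq> 0"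
    and "Q \<in> carrier_mat d d" "transpose_mat Q * Q = 1\<^sub>m d" "Q * transpose_mat Q = 1\<^sub>m d"
    and "\<And>i j. i \<le> j \<Longrightarrow> j < d \<Longrightarrow> lam j \<le> lam i"
    and "\<And>i. i < d \<Longrightarrow> lam i \<ge> 0"
    and "Lam = Q * mat_diag d lam * transpose_mat Q"
    and "w \<in> carrier_vec d" "s \<in> carrier_vec d" "\<xi> \<in> carrier_vec d"
    and "w = Q *\<^sub>v (s + \<xi>)"
    and "\<And>i. r \<le> i \<Longrightarrow> i < d \<Longrightarrow> s $ i = 0"
    and "\<And>i. i < r \<Longrightarrow> \<xi> $ i = 0"
    and "gaussian_vec d Lam mu"
    and "nu = normal_meas (\<sigma>\<^sup>2)"
  shows "(let Dm = mat_diag d lam;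
              V = mat_diag d (vstar d N r lam);
              U = c \<cdot>\<^sub>m (Q * V * transpose_mat Q);
              f = lsa d M (WPV_mat d (1 / c)) (WKQ_mat d U)
          in integral\<^sup>L (PiM {..<M} (\<lambda>_. mu) \<Otimes>\<^sub>M mu \<Otimes>\<^sub>M PiM {..<M} (\<lambda>_. nu))
               (\<lambda>(xs, xq, es). (f (prompt_mat d M w xs xq es) - scalar_prod w (vec d xq))\<^sup>2)
           = 1 / real M * qnorm2 (V * V * Dm * Dm * Dm) s
             + 1 / real M * (qnorm2 Dm (s + \<xi>) + \<sigma>\<^sup>2) * mat_tr (V * V * Dm * Dm)
             + qnorm2 Dm \<xi>
             + (\<Sum>i<r. (s $ i)\<^sup>2 * lam i * (lam i * vstar d N r lam i - 1)\<^sup>2))"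
proof -
  note A = assms
  interpret G: gsetup d Q Lam lam mu
    by unfold_locales (use A in auto)
  let ?nu = "normal_meas (\<sigma>\<^sup>2)"
  let ?P1 = "PiM {..<M} (\<lambda>_. mu)"
  let ?P3 = "PiM {..<M} (\<lambda>_. ?nu)"
  let ?\<Omega> = "?P1 \<Otimes>\<^sub>M mu \<Otimes>\<^sub>M ?P3"
  define v where "v = vstar d N r lam"
  define av where "av = s + \<xi>"
  define a where "a = (\<lambda>m. av $ m)"
  have av: "av \<in> carrier_vec d" using A(14,15) by (simp add: av_def)
  have w: "w = Q *\<^sub>v av" using A(16) by (simp add: av_def)
  have Mpos: "real M > 0" using A(3) by simp
  have v2: "\<sigma>\<^sup>2 \<ge> 0" by simp
  interpret PNU: prob_space ?nu by (rule normal_meas_facts(1)[OF v2])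
  interpret PMU: prob_space mu by (rule G.prob_mu)
  interpret P1: prob_space ?P1 by (rule prob_space_PiM) (rule G.prob_mu)
  interpret P3: prob_space ?P3 by (rule prob_space_PiM) (rule normal_meas_facts(1)[OF v2])
  interpret P23: pair_prob_space mu ?P3 by unfold_locales
  define C where "C xs es = (\<lambda>m. (1 / real M) * (\<Sum>j<M. (Sv Q d a (xs j) + es j) * v m * zc Q d m (xs j)) - av $ m)"
    for xs :: "nat \<Rightarrow> nat \<Rightarrow> real" and es :: "nat \<Rightarrow> real"
  define g where "g \<omega> = (Sv Q d (C (fst \<omega>) (snd (snd \<omega>))) (fst (snd \<omega>)))\<^sup>2"
    for \<omega> :: "(nat \<Rightarrow> nat \<Rightarrow> real) \<times> (nat \<Rightarrow> real) \<times> (nat \<Rightarrow> real)"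
  have ptw: "(lsa d M (WPV_mat d (1 / c)) (WKQ_mat d (c \<cdot>\<^sub>m (Q * mat_diag d v * transpose_mat Q)))
        (prompt_mat d M w xs xq es) - scalar_prod w (vec d xq))\<^sup>2 = g (xs, xq, es)" for xs xq es
    unfolding g_def C_def w a_def using integrand_eq[OF A(7) A(6) av A(3), of v xs xq es] by simp
  have B1: "(\<lambda>\<omega>. f (fst (snd \<omega>))) \<in> borel_measurable ?\<Omega>" if f: "f \<in> borel_measurable mu" for f
  proof -
    have "(\<lambda>\<omega>. fst (snd \<omega>)) \<in> ?\<Omega> \<rightarrow>\<^sub>M mu" by measurable
    from measurable_compose[OF this f] show ?thesis .
  qed
  have B2: "(\<lambda>\<omega>. f (fst \<omega> j)) \<in> borel_measurable ?\<Omega>" if j: "j \<in> {..<M}" and f: "f \<in> borel_measurable mu" for f j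
  proof -
    have "(\<lambda>\<omega>. fst \<omega> j) \<in> ?\<Omega> \<rightarrow>\<^sub>M mu"
      by (rule measurable_compose[OF measurable_fst measurable_component_singleton[OF j]])
    from measurable_compose[OF this f] show ?thesis .
  qed
  have B3: "(\<lambda>\<omega>. snd (snd \<omega>) j) \<in> borel_measurable ?\<Omega>" if j: "j \<in> {..<M}" for j
  proof -
    have s1: "(\<lambda>\<omega>. snd (snd \<omega>)) \<in> ?\<Omega> \<rightarrow>\<^sub>M ?P3" by measurable
    have "(\<lambda>\<omega>. snd (snd \<omega>) j) \<in> ?\<Omega> \<rightarrow>\<^sub>M ?nu"
      by (rule measurable_compose[OF s1 measurable_component_singleton[OF j]])
    moreover have "(\<lambda>x::real. x) \<in> borel_measurable ?nu" by (rule nu_meas[OF _ v2]) simp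
    ultimately show ?thesis by (rule measurable_compose)
  qed
  have zm: "zc Q d m \<in> borel_measurable mu" if "m \<in> {..<d}" for m
  proof -
    have "zc Q d m = Sv Q d (dl m)" using that by (auto simp: zc_Sv)
    then show ?thesis by simp
  qed
  have gm: "g \<in> borel_measurable ?\<Omega>"
    unfolding g_def C_def Sv_def
    by (intro borel_measurable_power borel_measurable_sum borel_measurable_times borel_measurable_diff
        borel_measurable_add measurable_const B3 B1[OF zm] B2[OF _ zm]) auto
  have gm'[measurable]: "(\<lambda>\<omega>. ennreal (g \<omega>)) \<in> borel_measurable ?\<Omega>" using gm by measurable
  define \<Psi> where "\<Psi> xs = (\<Sum>m<d. lam m * (((1 / real M) * (\<Sum>j<M. Sv Q d a (xs j) * v m * zc Q d m (xs j)) - a m)\<^sup>2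
        + \<sigma>\<^sup>2 * (\<Sum>j<M. (v m * zc Q d m (xs j) / real M)\<^sup>2)))" for xs
  have inner1: "(\<integral>\<^sup>+ xq. ennreal (g (xs, xq, es)) \<partial>mu) = ennreal (Vq d lam (C xs es) (C xs es))" for xs es
  proof -
    have "(\<integral>\<^sup>+ xq. ennreal (g (xs, xq, es)) \<partial>mu) = ennreal (integral\<^sup>L mu (\<lambda>xq. (Sv Q d (C xs es) xq)\<^sup>2))"
      unfolding g_def fst_conv snd_conv by (rule nn_integral_eq_integral) (use G.Z(1)[of "C xs es" 2] in auto)
    then show ?thesis using G.Z(2) by simp
  qed
  have inner2: "(\<integral>\<^sup>+ es. ennreal (Vq d lam (C xs es) (C xs es)) \<partial>?P3) = ennreal (\<Psi> xs)" for xs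
  proof -
    have Ceq: "(C xs es m)\<^sup>2 = ((1 / real M) * (\<Sum>j<M. (Sv Q d a (xs j) + es j) * (v m * zc Q d m (xs j))) - av $ m)\<^sup>2"
      for es m by (simp add: C_def mult.assoc)
    have Veq: "Vq d lam (C xs es) (C xs es) = (\<Sum>m<d. lam m * (C xs es m)\<^sup>2)" for es
      unfolding Vq_def by (simp add: power2_eq_square mult.assoc)
    note ES = es_step[OF A(5) A(3), of "\<lambda>j. Sv Q d a (xs j)"]
    have I: "integrable ?P3 (\<lambda>es. (C xs es m)\<^sup>2)" for m
      unfolding Ceq by (rule ES(1))
    have V: "integral\<^sup>L ?P3 (\<lambda>es. (C xs es m)\<^sup>2) = ((1 / real M) * (\<Sum>j<M. Sv Q d a (xs j) * v m * zc Q d m (xs j)) - a m)\<^sup>2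
        + \<sigma>\<^sup>2 * (\<Sum>j<M. (v m * zc Q d m (xs j) / real M)\<^sup>2)" for m
      unfolding Ceq ES(2) by (simp add: a_def mult.assoc)
    have "(\<integral>\<^sup>+ es. ennreal (Vq d lam (C xs es) (C xs es)) \<partial>?P3) = ennreal (integral\<^sup>L ?P3 (\<lambda>es. Vq d lam (C xs es) (C xs es)))"
      by (rule nn_integral_eq_integral) (use A(11) in \<open>auto simp: Veq I intro!: AE_I2 sum_nonneg\<close>)
    also have "integral\<^sup>L ?P3 (\<lambda>es. Vq d lam (C xs es) (C xs es)) = \<Psi> xs"
      unfolding Veq \<Psi>_def using I by (simp add: Bochner_Integration.integral_sum V)
    finally show ?thesis .
  qed
  have inner: "(\<integral>\<^sup>+ y. ennreal (g (xs, y)) \<partial>(mu \<Otimes>\<^sub>M ?P3)) = ennreal (\<Psi> xs)" if xs: "xs \<in> space ?P1" for xs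
  proof -
    have m: "(\<lambda>y. ennreal (g (xs, y))) \<in> borel_measurable (mu \<Otimes>\<^sub>M ?P3)"
      by (rule measurable_Pair2[OF gm' xs])
    have "(\<integral>\<^sup>+ y. ennreal (g (xs, y)) \<partial>(mu \<Otimes>\<^sub>M ?P3)) = (\<integral>\<^sup>+ es. (\<integral>\<^sup>+ xq. ennreal (g (xs, xq, es)) \<partial>mu) \<partial>?P3)"
      using P23.nn_integral_snd[OF m] by simp
    also have "\<dots> = ennreal (\<Psi> xs)" by (simp add: inner1 inner2)
    finally show ?thesis .
  qed
  have XS: "integrable ?P1 (\<lambda>xs. ((1 / real M) * (\<Sum>j<M. Sv Q d a (xs j) * v m * zc Q d m (xs j)) - a m)\<^sup>2
        + \<sigma>\<^sup>2 * (\<Sum>j<M. (v m * zc Q d m (xs j) / real M)\<^sup>2)) \<and>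
     integral\<^sup>L ?P1 (\<lambda>xs. ((1 / real M) * (\<Sum>j<M. Sv Q d a (xs j) * v m * zc Q d m (xs j)) - a m)\<^sup>2
        + \<sigma>\<^sup>2 * (\<Sum>j<M. (v m * zc Q d m (xs j) / real M)\<^sup>2))
     = (v m * lam m * a m - a m)^2 + (1 / real M) * ((v m)^2 * (Vq d lam a a * lam m + 2 * (lam m * a m)^2)
            - 2 * v m * a m * (lam m * a m) + (a m)^2 - (v m * lam m * a m - a m)^2) + \<sigma>\<^sup>2 * (real M * ((v m / real M)^2 * lam m))"
    if m: "m < d" for m
    using G.xs_step[OF m A(3), of a "v m"] G.xs_step2[OF m, of M "v m"] by simp
  have PsiI: "integrable ?P1 \<Psi>"
    unfolding \<Psi>_def[abs_def] using XS by (intro Bochner_Integration.integrable_sum integrable_mult_right) auto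
  have PsiV: "integral\<^sup>L ?P1 \<Psi> = (\<Sum>m<d. lam m * ((v m * lam m * a m - a m)^2 + (1 / real M) * ((v m)^2 * (Vq d lam a a * lam m + 2 * (lam m * a m)^2)
            - 2 * v m * a m * (lam m * a m) + (a m)^2 - (v m * lam m * a m - a m)^2) + \<sigma>\<^sup>2 * (real M * ((v m / real M)^2 * lam m))))"
    unfolding \<Psi>_def[abs_def] using XS by (simp add: Bochner_Integration.integral_sum)
  have Psi0: "\<Psi> xs \<ge> 0" for xs
    unfolding \<Psi>_def using A(11) by (intro sum_nonneg mult_nonneg_nonneg add_nonneg_nonneg sum_nonneg) auto
  have "(\<integral>\<^sup>+ \<omega>. ennreal (g \<omega>) \<partial>?\<Omega>) = (\<integral>\<^sup>+ xs. (\<integral>\<^sup>+ y. ennreal (g (xs, y)) \<partial>(mu \<Otimes>\<^sub>M ?P3)) \<partial>?P1)"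
    using sigma_finite_measure.nn_integral_fst[OF prob_space_imp_sigma_finite[OF P23.prob_space_axioms] gm'] by simp
  also have "\<dots> = (\<integral>\<^sup>+ xs. ennreal (\<Psi> xs) \<partial>?P1)"
    by (rule nn_integral_cong) (simp add: inner)
  also have "\<dots> = ennreal (integral\<^sup>L ?P1 \<Psi>)"
    by (rule nn_integral_eq_integral[OF PsiI]) (simp add: Psi0)
  finally have NN: "(\<integral>\<^sup>+ \<omega>. ennreal (g \<omega>) \<partial>?\<Omega>) = ennreal (integral\<^sup>L ?P1 \<Psi>)" .
  have Ig: "integral\<^sup>L ?\<Omega> g = integral\<^sup>L ?P1 \<Psi>"
  proof -
    have "integral\<^sup>L ?\<Omega> g = enn2real (\<integral>\<^sup>+ \<omega>. ennreal (g \<omega>) \<partial>?\<Omega>)"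
      by (rule integral_eq_nn_integral[OF gm]) (simp add: g_def)
    also have "\<dots> = integral\<^sup>L ?P1 \<Psi>"
    proof -
      have "integral\<^sup>L ?P1 \<Psi> \<ge> 0" by (rule Bochner_Integration.integral_nonneg) (simp add: Psi0)
      then show ?thesis unfolding NN by simp
    qed
    finally show ?thesis .
  qed
  have Fg: "(\<lambda>(xs, xq, es). (lsa d M (WPV_mat d (1 / c)) (WKQ_mat d (c \<cdot>\<^sub>m (Q * mat_diag d v * transpose_mat Q)))
        (prompt_mat d M w xs xq es) - scalar_prod w (vec d xq))\<^sup>2) = g"
  proof (rule ext)
    fix \<omega> :: "(nat \<Rightarrow> nat \<Rightarrow> real) \<times> (nat \<Rightarrow> real) \<times> (nat \<Rightarrow> real)"
    obtain xs xq es where o: "\<omega> = (xs, xq, es)" by (cases \<omega>) auto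
    show "(case \<omega> of (xs, xq, es) \<Rightarrow> (lsa d M (WPV_mat d (1 / c)) (WKQ_mat d (c \<cdot>\<^sub>m (Q * mat_diag d v * transpose_mat Q)))
        (prompt_mat d M w xs xq es) - scalar_prod w (vec d xq))\<^sup>2) = g \<omega>"
      unfolding o using ptw by simp
  qed
  have M5: "mat_diag d v * mat_diag d v * mat_diag d lam * mat_diag d lam * mat_diag d lam
     = mat_diag d (\<lambda>i. v i * v i * lam i * lam i * lam i)" by (simp add: mat_diag_diag)
  have M4: "mat_diag d v * mat_diag d v * mat_diag d lam * mat_diag d lam
     = mat_diag d (\<lambda>i. v i * v i * lam i * lam i)" by (simp add: mat_diag_diag)
  have q1: "qnorm2 (mat_diag d (\<lambda>i. v i * v i * lam i * lam i * lam i)) s = (\<Sum>i<d. v i * v i * lam i * lam i * lam i * (s $ i)^2)"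
    by (rule qnorm2_diag[OF A(14)])
  have q2: "qnorm2 (mat_diag d lam) (s + \<xi>) = Vq d lam a a"
    unfolding qnorm2_diag[OF add_carrier_vec[OF A(14) A(15)]] Vq_def a_def av_def
    by (simp add: power2_eq_square mult.assoc)
  have q3: "qnorm2 (mat_diag d lam) \<xi> = (\<Sum>i<d. lam i * (\<xi> $ i)^2)"
    by (rule qnorm2_diag[OF A(15)])
  have tr: "mat_tr (mat_diag d (\<lambda>i. v i * v i * lam i * lam i)) = (\<Sum>i<d. v i * v i * lam i * lam i)"
    by (rule mat_tr_diag)
  define R where "R i = (if i < r then (s $ i)\<^sup>2 * lam i * (lam i * v i - 1)\<^sup>2 else 0)" for i
  have R4: "(\<Sum>i<r. (s $ i)\<^sup>2 * lam i * (lam i * v i - 1)\<^sup>2) = (\<Sum>i<d. R i)"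
    unfolding R_def by (rule sum.mono_neutral_cong_left) (use A(4) in auto)
  have RHS: "1 / real M * (\<Sum>i<d. v i * v i * lam i * lam i * lam i * (s $ i)^2)
      + 1 / real M * (Vq d lam a a + \<sigma>\<^sup>2) * (\<Sum>i<d. v i * v i * lam i * lam i)
      + (\<Sum>i<d. lam i * (\<xi> $ i)^2) + (\<Sum>i<d. R i)
    = (\<Sum>i<d. 1 / real M * (v i * v i * lam i * lam i * lam i * (s $ i)^2)
      + 1 / real M * (Vq d lam a a + \<sigma>\<^sup>2) * (v i * v i * lam i * lam i)
      + lam i * (\<xi> $ i)^2 + R i)"
    by (simp add: sum.distrib sum_distrib_left)
  have TERM: "lam m * ((v m * lam m * a m - a m)^2 + (1 / real M) * ((v m)^2 * (Vq d lam a a * lam m + 2 * (lam m * a m)^2)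
            - 2 * v m * a m * (lam m * a m) + (a m)^2 - (v m * lam m * a m - a m)^2) + \<sigma>\<^sup>2 * (real M * ((v m / real M)^2 * lam m)))
    = 1 / real M * (v m * v m * lam m * lam m * lam m * (s $ m)^2)
      + 1 / real M * (Vq d lam a a + \<sigma>\<^sup>2) * (v m * v m * lam m * lam m)
      + lam m * (\<xi> $ m)^2 + R m" if m: "m < d" for m
  proof (rule term_id[OF Mpos])
    have am: "a m = s $ m + \<xi> $ m" using m A(14,15) by (simp add: a_def av_def)
    show "(a m = s $ m \<and> \<xi> $ m = 0 \<and> R m = (s $ m)^2 * lam m * (lam m * v m - 1)^2) \<or>
          (a m = \<xi> $ m \<and> s $ m = 0 \<and> v m = 0 \<and> R m = 0)"
    proof (cases "m < r")
      case True
      then show ?thesis using A(18)[OF True] am by (simp add: R_def)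
    next
      case False
      then have "s $ m = 0" using A(17) m by simp
      moreover have "v m = 0" using False by (simp add: v_def vstar_def)
      ultimately show ?thesis using False am by (simp add: R_def)
    qed
  qed
  show ?thesis
    unfolding Let_def v_def[symmetric] A(20) Fg Ig PsiV
    unfolding M5
    unfolding M4 q1 q2 q3 tr R4 RHS
    by (intro sum.cong refl) (rule TERM, simp)
qed

end
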